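(* Let $N$ be a nonempty finite set, for each $i\in N$ let $S_i$ be a nonempty lattice, and let $S\subset\prod_{i\in N}S_i$ be a nonempty sublattice (product order) such that every projection $S\to S_i$ is surjective. Suppose $S$ is a subcomplete sublattice of $\prod_{i\in N}S_i$. Then: (1) for every $i\in N$, $S_i$ is a complete lattice; (2) for every $i\in N$ and every $x_{-i}\in S_{-i}:=\prod_{j\ne i}S_j$, the set $S_i(x_{-i}):=\{x_i\in S_i:(x_i,x_{-i})\in S\}$ is a subcomplete sublattice of $S_i$; (3) for every $x\in S$, the set $S(x):=\left(\prod_{i\in N}S_i(x_{-i})\right)\cap S$ is a subcomplete sublattice of $S$.
   Context: A subset $T$ of a poset $P$ is a subcomplete sublattice of $P$ if for every nonempty $A\subset T$, $\sup_P A$ and $\inf_P A$ exist and belong to $T$; $P$ is a complete lattice if it is a subcomplete sublattice of itself. *)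

theory Defs
  imports "HOL-Library.FuncSet"
begin

definition poset_on :: "'a set \<Rightarrow> ('a \<Rightarrow> 'a \<Rightarrow> bool) \<Rightarrow> bool" where
  "poset_on P le \<longleftrightarrow> (\<forall>x\<in>P. le x x) \<and>
     (\<forall>x\<in>P. \<forall>y\<in>P. le x y \<and> le y x \<longrightarrow> x = y) \<and>
     (\<forall>x\<in>P. \<forall>y\<in>P. \<forall>z\<in>P. le x y \<and> le y z \<longrightarrow> le x z)"

definition is_ub :: "'a set \<Rightarrow> ('a \<Rightarrow> 'a \<Rightarrow> bool) \<Rightarrow> 'a set \<Rightarrow> 'a \<Rightarrow> bool" where
  "is_ub P le A u \<longleftrightarrow> u \<in> P \<and> (\<forall>a\<in>A. le a u)"

definition is_lb :: "'a set \<Rightarrow> ('a \<Rightarrow> 'a \<Rightarrow> bool) \<Rightarrow> 'a set \<Rightarrow> 'a \<Rightarrow> bool" where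
  "is_lb P le A u \<longleftrightarrow> u \<in> P \<and> (\<forall>a\<in>A. le u a)"

definition is_lub :: "'a set \<Rightarrow> ('a \<Rightarrow> 'a \<Rightarrow> bool) \<Rightarrow> 'a set \<Rightarrow> 'a \<Rightarrow> bool" where
  "is_lub P le A s \<longleftrightarrow> is_ub P le A s \<and> (\<forall>v. is_ub P le A v \<longrightarrow> le s v)"

definition is_glb :: "'a set \<Rightarrow> ('a \<Rightarrow> 'a \<Rightarrow> bool) \<Rightarrow> 'a set \<Rightarrow> 'a \<Rightarrow> bool" where
  "is_glb P le A s \<longleftrightarrow> is_lb P le A s \<and> (\<forall>v. is_lb P le A v \<longrightarrow> le v s)"

definition lattice_on :: "'a set \<Rightarrow> ('a \<Rightarrow> 'a \<Rightarrow> bool) \<Rightarrow> bool" where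
  "lattice_on P le \<longleftrightarrow> poset_on P le \<and>
     (\<forall>x\<in>P. \<forall>y\<in>P. (\<exists>s. is_lub P le {x, y} s) \<and> (\<exists>t. is_glb P le {x, y} t))"

definition sublattice_of :: "'a set \<Rightarrow> ('a \<Rightarrow> 'a \<Rightarrow> bool) \<Rightarrow> 'a set \<Rightarrow> bool" where
  "sublattice_of P le T \<longleftrightarrow> T \<subseteq> P \<and>
     (\<forall>x\<in>T. \<forall>y\<in>T. (\<exists>s. is_lub P le {x, y} s \<and> s \<in> T) \<and> (\<exists>t. is_glb P le {x, y} t \<and> t \<in> T))"

definition subcomplete_sublattice :: "'a set \<Rightarrow> ('a \<Rightarrow> 'a \<Rightarrow> bool) \<Rightarrow> 'a set \<Rightarrow> bool" where
  "subcomplete_sublattice P le T \<longleftrightarrow> T \<subseteq> P \<and>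
     (\<forall>A. A \<noteq> {} \<and> A \<subseteq> T \<longrightarrow>
        (\<exists>s. is_lub P le A s \<and> s \<in> T) \<and> (\<exists>t. is_glb P le A t \<and> t \<in> T))"

definition complete_lattice_on :: "'a set \<Rightarrow> ('a \<Rightarrow> 'a \<Rightarrow> bool) \<Rightarrow> bool" where
  "complete_lattice_on P le \<longleftrightarrow> poset_on P le \<and> subcomplete_sublattice P le P"

definition prod_le :: "'i set \<Rightarrow> ('i \<Rightarrow> 'a \<Rightarrow> 'a \<Rightarrow> bool) \<Rightarrow> ('i \<Rightarrow> 'a) \<Rightarrow> ('i \<Rightarrow> 'a) \<Rightarrow> bool" where
  "prod_le N le x y \<longleftrightarrow> (\<forall>i\<in>N. le i (x i) (y i))"

text \<open>Section S_i(x_{-i}) = {a. (a, x_{-i}) \<in> S}, where x_{-i} \<in> PiE (N - {i}) Si\<close>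
definition section_at :: "('i \<Rightarrow> 'a) set \<Rightarrow> 'i \<Rightarrow> ('i \<Rightarrow> 'a set) \<Rightarrow> ('i \<Rightarrow> 'a) \<Rightarrow> 'a set" where
  "section_at S i Si xmi = {a \<in> Si i. xmi(i := a) \<in> S}"

end

theory Submission
  imports Defs
begin

lemma lub_comp:
  assumes "i \<in> N" "is_lub (PiE N Si) (prod_le N le) A s"
  shows "is_lub (Si i) (le i) ((\<lambda>y. y i) ` A) (s i)"
proof -
  have sP: "s \<in> PiE N Si" and ub: "\<forall>a\<in>A. prod_le N le a s"
    and least: "\<And>v. is_ub (PiE N Si) (prod_le N le) A v \<Longrightarrow> prod_le N le s v"
    using assms(2) unfolding is_lub_def is_ub_def by auto
  have "s i \<in> Si i" using sP assms(1) by auto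
  moreover have "\<forall>a\<in>(\<lambda>y. y i) ` A. le i a (s i)" using ub assms(1) unfolding prod_le_def by auto
  moreover have "le i (s i) v" if v: "is_ub (Si i) (le i) ((\<lambda>y. y i) ` A) v" for v
  proof -
    have "s(i:=v) \<in> PiE N Si" using sP v assms(1) unfolding is_ub_def
      by (auto simp: PiE_def extensional_def)
    moreover have "\<forall>a\<in>A. prod_le N le a (s(i:=v))"
      using ub v unfolding prod_le_def is_ub_def by auto
    ultimately have "prod_le N le s (s(i:=v))" using least unfolding is_ub_def by blast
    thus ?thesis using assms(1) unfolding prod_le_def by auto
  qed
  ultimately show ?thesis unfolding is_lub_def is_ub_def by auto
qed

lemma glb_comp:
  assumes "i \<in> N" "is_glb (PiE N Si) (prod_le N le) A s"
  shows "is_glb (Si i) (le i) ((\<lambda>y. y i) ` A) (s i)"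
proof -
  have sP: "s \<in> PiE N Si" and ub: "\<forall>a\<in>A. prod_le N le s a"
    and least: "\<And>v. is_lb (PiE N Si) (prod_le N le) A v \<Longrightarrow> prod_le N le v s"
    using assms(2) unfolding is_glb_def is_lb_def by auto
  have "s i \<in> Si i" using sP assms(1) by auto
  moreover have "\<forall>a\<in>(\<lambda>y. y i) ` A. le i (s i) a" using ub assms(1) unfolding prod_le_def by auto
  moreover have "le i v (s i)" if v: "is_lb (Si i) (le i) ((\<lambda>y. y i) ` A) v" for v
  proof -
    have "s(i:=v) \<in> PiE N Si" using sP v assms(1) unfolding is_lb_def
      by (auto simp: PiE_def extensional_def)
    moreover have "\<forall>a\<in>A. prod_le N le (s(i:=v)) a"
      using ub v unfolding prod_le_def is_lb_def by auto
    ultimately have "prod_le N le (s(i:=v)) s" using least unfolding is_lb_def by blast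
    thus ?thesis using assms(1) unfolding prod_le_def by auto
  qed
  ultimately show ?thesis unfolding is_glb_def is_lb_def by auto
qed

lemma lub_unique: "poset_on P le \<Longrightarrow> is_lub P le A s \<Longrightarrow> is_lub P le A t \<Longrightarrow> s = t"
  unfolding poset_on_def is_lub_def is_ub_def by blast

lemma glb_unique: "poset_on P le \<Longrightarrow> is_glb P le A s \<Longrightarrow> is_glb P le A t \<Longrightarrow> s = t"
  unfolding poset_on_def is_glb_def is_lb_def by blast

lemma poset_refl: "poset_on P le \<Longrightarrow> x \<in> P \<Longrightarrow> le x x"
  unfolding poset_on_def by blast

lemma poset_antisym: "poset_on P le \<Longrightarrow> x \<in> P \<Longrightarrow> y \<in> P \<Longrightarrow> le x y \<Longrightarrow> le y x \<Longrightarrow> x = y"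
  unfolding poset_on_def by blast

lemma lub_sec:
  assumes pos: "\<forall>j\<in>N. poset_on (Si j) (le j)" and i: "i \<in> N"
    and xm: "xmi \<in> PiE (N - {i}) Si" and A: "A \<noteq> {}" "A \<subseteq> Si i"
    and l: "is_lub (PiE N Si) (prod_le N le) ((\<lambda>a. xmi(i:=a)) ` A) s"
  shows "s = xmi(i := s i)"
proof (rule ext)
  fix j
  have sP: "s \<in> PiE N Si" and ub: "\<forall>a\<in>A. prod_le N le (xmi(i:=a)) s"
    and least: "\<And>v. is_ub (PiE N Si) (prod_le N le) ((\<lambda>a. xmi(i:=a)) ` A) v \<Longrightarrow> prod_le N le s v"
    using l unfolding is_lub_def is_ub_def by auto
  show "s j = (xmi(i := s i)) j"
  proof (cases "j = i")
    case True then show ?thesis by simp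
  next
    case False
    show ?thesis
    proof (cases "j \<in> N")
      case False
      then show ?thesis using sP xm \<open>j \<noteq> i\<close> by (auto simp: PiE_def extensional_def)
    next
      case True
      obtain a where a: "a \<in> A" using A by auto
      have "le j ((xmi(i:=a)) j) (s j)" using ub a True unfolding prod_le_def by blast
      then have 1: "le j (xmi j) (s j)" using \<open>j \<noteq> i\<close> by simp
      have si: "s i \<in> Si i" using PiE_mem[OF sP i] .
      have "xmi(i := s i) \<in> PiE N Si" using xm si i by (auto simp: PiE_def extensional_def)
      moreover have "\<forall>b\<in>A. prod_le N le (xmi(i:=b)) (xmi(i:=s i))"
        unfolding prod_le_def
      proof (intro ballI)
        fix b k assume b: "b \<in> A" and k: "k \<in> N"
        show "le k ((xmi(i:=b)) k) ((xmi(i:=s i)) k)"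
        proof (cases "k = i")
          case True
          have "le i ((xmi(i:=b)) i) (s i)" using ub b i unfolding prod_le_def by blast
          then show ?thesis using True by simp
        next
          case False
          then have "k \<in> N - {i}" using k by blast
          then have "xmi k \<in> Si k" using PiE_mem[OF xm] by blast
          then have "le k (xmi k) (xmi k)" by (rule poset_refl[OF pos[rule_format, OF k]])
          then show ?thesis using False by simp
        qed
      qed
      ultimately have "prod_le N le s (xmi(i:=s i))" using least unfolding is_ub_def by blast
      then have "le j (s j) ((xmi(i:=s i)) j)" using True unfolding prod_le_def by blast
      then have 2: "le j (s j) (xmi j)" using \<open>j \<noteq> i\<close> by simp
      have sj: "s j \<in> Si j" using PiE_mem[OF sP True] .
      have jN: "j \<in> N - {i}" using True \<open>j \<noteq> i\<close> by blast
      have xj: "xmi j \<in> Si j" using PiE_mem[OF xm jN] .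
      have pj: "poset_on (Si j) (le j)" using pos True by blast
      have "s j = xmi j" by (rule poset_antisym[OF pj sj xj]) (use 1 2 in blast)+
      then show ?thesis using \<open>j \<noteq> i\<close> by simp
    qed
  qed
qed

lemma glb_sec:
  assumes pos: "\<forall>j\<in>N. poset_on (Si j) (le j)" and i: "i \<in> N"
    and xm: "xmi \<in> PiE (N - {i}) Si" and A: "A \<noteq> {}" "A \<subseteq> Si i"
    and l: "is_glb (PiE N Si) (prod_le N le) ((\<lambda>a. xmi(i:=a)) ` A) s"
  shows "s = xmi(i := s i)"
proof (rule ext)
  fix j
  have sP: "s \<in> PiE N Si" and ub: "\<forall>a\<in>A. prod_le N le s (xmi(i:=a))"
    and least: "\<And>v. is_lb (PiE N Si) (prod_le N le) ((\<lambda>a. xmi(i:=a)) ` A) v \<Longrightarrow> prod_le N le v s"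
    using l unfolding is_glb_def is_lb_def by auto
  show "s j = (xmi(i := s i)) j"
  proof (cases "j = i")
    case True then show ?thesis by simp
  next
    case False
    show ?thesis
    proof (cases "j \<in> N")
      case False
      then show ?thesis using sP xm \<open>j \<noteq> i\<close> by (auto simp: PiE_def extensional_def)
    next
      case True
      obtain a where a: "a \<in> A" using A by auto
      have "le j (s j) ((xmi(i:=a)) j)" using ub a True unfolding prod_le_def by blast
      then have 1: "le j (s j) (xmi j)" using \<open>j \<noteq> i\<close> by simp
      have si: "s i \<in> Si i" using PiE_mem[OF sP i] .
      have "xmi(i := s i) \<in> PiE N Si" using xm si i by (auto simp: PiE_def extensional_def)
      moreover have "\<forall>b\<in>A. prod_le N le (xmi(i:=s i)) (xmi(i:=b))"
        unfolding prod_le_def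
      proof (intro ballI)
        fix b k assume b: "b \<in> A" and k: "k \<in> N"
        show "le k ((xmi(i:=s i)) k) ((xmi(i:=b)) k)"
        proof (cases "k = i")
          case True
          have "le i (s i) ((xmi(i:=b)) i)" using ub b i unfolding prod_le_def by blast
          then show ?thesis using True by simp
        next
          case False
          then have "k \<in> N - {i}" using k by blast
          then have "xmi k \<in> Si k" using PiE_mem[OF xm] by blast
          then have "le k (xmi k) (xmi k)" by (rule poset_refl[OF pos[rule_format, OF k]])
          then show ?thesis using False by simp
        qed
      qed
      ultimately have "prod_le N le (xmi(i:=s i)) s" using least unfolding is_lb_def by blast
      then have "le j ((xmi(i:=s i)) j) (s j)" using True unfolding prod_le_def by blast
      then have 2: "le j (xmi j) (s j)" using \<open>j \<noteq> i\<close> by simp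
      have sj: "s j \<in> Si j" using PiE_mem[OF sP True] .
      have jN: "j \<in> N - {i}" using True \<open>j \<noteq> i\<close> by blast
      have xj: "xmi j \<in> Si j" using PiE_mem[OF xm jN] .
      have pj: "poset_on (Si j) (le j)" using pos True by blast
      have "s j = xmi j" by (rule poset_antisym[OF pj sj xj]) (use 1 2 in blast)+
      then show ?thesis using \<open>j \<noteq> i\<close> by simp
    qed
  qed
qed

theorem lemma5p2:
  fixes N :: "'i set" and Si :: "'i \<Rightarrow> 'a set" and le :: "'i \<Rightarrow> 'a \<Rightarrow> 'a \<Rightarrow> bool"
    and S :: "('i \<Rightarrow> 'a) set"
  assumes "finite N" and "N \<noteq> {}"
    and "\<forall>i\<in>N. Si i \<noteq> {} \<and> lattice_on (Si i) (le i)"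
    and "S \<noteq> {}"
    and "sublattice_of (PiE N Si) (prod_le N le) S"
    and "\<forall>i\<in>N. (\<lambda>x. x i) ` S = Si i"
    and "subcomplete_sublattice (PiE N Si) (prod_le N le) S"
  shows "(\<forall>i\<in>N. complete_lattice_on (Si i) (le i))
    \<and> (\<forall>i\<in>N. \<forall>xmi\<in>PiE (N - {i}) Si.
          subcomplete_sublattice (Si i) (le i) (section_at S i Si xmi))
    \<and> (\<forall>x\<in>S. subcomplete_sublattice S (prod_le N le)
          ({y \<in> PiE N Si. \<forall>i\<in>N. y i \<in> section_at S i Si (restrict x (N - {i}))} \<inter> S))"
proof -
  have pos: "\<forall>j\<in>N. poset_on (Si j) (le j)" using assms(3) unfolding lattice_on_def by blast
  have SP: "S \<subseteq> PiE N Si" using assms(7) unfolding subcomplete_sublattice_def by blast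
  have sc: "\<And>B. B \<noteq> {} \<Longrightarrow> B \<subseteq> S \<Longrightarrow>
     (\<exists>s. is_lub (PiE N Si) (prod_le N le) B s \<and> s \<in> S) \<and> (\<exists>t. is_glb (PiE N Si) (prod_le N le) B t \<and> t \<in> S)"
    using assms(7) unfolding subcomplete_sublattice_def by simp
  have P1: "complete_lattice_on (Si i) (le i)" if i: "i \<in> N" for i
  proof -
    have "(\<exists>s. is_lub (Si i) (le i) A s \<and> s \<in> Si i) \<and> (\<exists>t. is_glb (Si i) (le i) A t \<and> t \<in> Si i)"
      if A: "A \<noteq> {}" "A \<subseteq> Si i" for A
    proof -
      define B where "B = {y \<in> S. y i \<in> A}"
      have BA: "(\<lambda>y. y i) ` B = A"
      proof
        show "(\<lambda>y. y i) ` B \<subseteq> A" unfolding B_def by auto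
        show "A \<subseteq> (\<lambda>y. y i) ` B"
        proof
          fix a assume a: "a \<in> A"
          then have "a \<in> (\<lambda>x. x i) ` S" using A assms(6) i by auto
          then obtain y where "y \<in> S" "a = y i" by auto
          then show "a \<in> (\<lambda>y. y i) ` B" using a unfolding B_def by auto
        qed
      qed
      then have "B \<noteq> {}" using A by auto
      moreover have "B \<subseteq> S" unfolding B_def by auto
      ultimately obtain s t where s: "is_lub (PiE N Si) (prod_le N le) B s"
        and t: "is_glb (PiE N Si) (prod_le N le) B t" using sc by blast
      have ls: "is_lub (Si i) (le i) A (s i)" using lub_comp[OF i s] BA by simp
      have lt: "is_glb (Si i) (le i) A (t i)" using glb_comp[OF i t] BA by simp
      have "s i \<in> Si i" using ls unfolding is_lub_def is_ub_def by blast
      moreover have "t i \<in> Si i" using lt unfolding is_glb_def is_lb_def by blast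
      ultimately show ?thesis using ls lt by blast
    qed
    then have "subcomplete_sublattice (Si i) (le i) (Si i)"
      unfolding subcomplete_sublattice_def by blast
    moreover have "poset_on (Si i) (le i)" using pos i by blast
    ultimately show ?thesis unfolding complete_lattice_on_def by blast
  qed
  have P2: "subcomplete_sublattice (Si i) (le i) (section_at S i Si xmi)"
    if i: "i \<in> N" and xm: "xmi \<in> PiE (N - {i}) Si" for i xmi
  proof -
    have "(\<exists>s. is_lub (Si i) (le i) A s \<and> s \<in> section_at S i Si xmi) \<and>
          (\<exists>t. is_glb (Si i) (le i) A t \<and> t \<in> section_at S i Si xmi)"
      if A: "A \<noteq> {}" "A \<subseteq> section_at S i Si xmi" for A
    proof -
      have ASi: "A \<subseteq> Si i" using A unfolding section_at_def by auto
      define B where "B = (\<lambda>a. xmi(i:=a)) ` A"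
      have BA: "(\<lambda>y. y i) ` B = A" unfolding B_def by (simp add: image_image)
      have "B \<noteq> {}" using A unfolding B_def by auto
      moreover have "B \<subseteq> S" using A unfolding B_def section_at_def by auto
      ultimately obtain s t where s: "is_lub (PiE N Si) (prod_le N le) B s" "s \<in> S"
        and t: "is_glb (PiE N Si) (prod_le N le) B t" "t \<in> S" using sc by blast
      have se: "s = xmi(i := s i)" using lub_sec[OF pos i xm A(1) ASi] s(1) unfolding B_def by blast
      have te: "t = xmi(i := t i)" using glb_sec[OF pos i xm A(1) ASi] t(1) unfolding B_def by blast
      have "s i \<in> Si i" "t i \<in> Si i" using s t SP i by auto
      then have "s i \<in> section_at S i Si xmi" "t i \<in> section_at S i Si xmi"
        using se te s(2) t(2) unfolding section_at_def by auto
      then show ?thesis using lub_comp[OF i s(1)] glb_comp[OF i t(1)] BA by auto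
    qed
    moreover have "section_at S i Si xmi \<subseteq> Si i" unfolding section_at_def by auto
    ultimately show ?thesis unfolding subcomplete_sublattice_def by auto
  qed
  have P3: "subcomplete_sublattice S (prod_le N le)
          ({y \<in> PiE N Si. \<forall>i\<in>N. y i \<in> section_at S i Si (restrict x (N - {i}))} \<inter> S)"
    if x: "x \<in> S" for x
  proof -
    let ?T = "{y \<in> PiE N Si. \<forall>i\<in>N. y i \<in> section_at S i Si (restrict x (N - {i}))} \<inter> S"
    have xP: "x \<in> PiE N Si" using x SP by auto
    have rx: "restrict x (N - {i}) \<in> PiE (N - {i}) Si" if "i \<in> N" for i
      using xP by auto
    have "(\<exists>s. is_lub S (prod_le N le) A s \<and> s \<in> ?T) \<and> (\<exists>t. is_glb S (prod_le N le) A t \<and> t \<in> ?T)"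
      if A: "A \<noteq> {}" "A \<subseteq> ?T" for A
    proof -
      obtain s t where s: "is_lub (PiE N Si) (prod_le N le) A s" "s \<in> S"
        and t: "is_glb (PiE N Si) (prod_le N le) A t" "t \<in> S"
      proof -
        have AS: "A \<subseteq> S" using A(2) by (rule subset_trans) blast
        show ?thesis using sc[OF A(1) AS] that by blast
      qed
      have sl: "is_lub S (prod_le N le) A s" using s SP unfolding is_lub_def is_ub_def by auto
      have tl: "is_glb S (prod_le N le) A t" using t SP unfolding is_glb_def is_lb_def by auto
      have "s i \<in> section_at S i Si (restrict x (N - {i})) \<and> t i \<in> section_at S i Si (restrict x (N - {i}))"
        if i: "i \<in> N" for i
      proof -
        let ?C = "section_at S i Si (restrict x (N - {i}))"
        have sub: "(\<lambda>y. y i) ` A \<subseteq> ?C" using A(2) i by blast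
        have ne: "(\<lambda>y. y i) ` A \<noteq> {}" using A by auto
        have hh: "\<forall>A. A \<noteq> {} \<and> A \<subseteq> ?C \<longrightarrow>
          (\<exists>s. is_lub (Si i) (le i) A s \<and> s \<in> ?C) \<and> (\<exists>t. is_glb (Si i) (le i) A t \<and> t \<in> ?C)"
          using P2[OF i rx[OF i]] unfolding subcomplete_sublattice_def by (rule conjunct2)
        obtain s' t' where s': "is_lub (Si i) (le i) ((\<lambda>y. y i) ` A) s'" "s' \<in> ?C"
          and t': "is_glb (Si i) (le i) ((\<lambda>y. y i) ` A) t'" "t' \<in> ?C"
          using hh[rule_format, OF conjI[OF ne sub]] by blast
        have "s' = s i" using lub_unique[OF pos[rule_format, OF i] s'(1) lub_comp[OF i s(1)]] .
        moreover have "t' = t i" using glb_unique[OF pos[rule_format, OF i] t'(1) glb_comp[OF i t(1)]] .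
        ultimately show ?thesis using s' t' by simp
      qed
      moreover have "s \<in> PiE N Si" "t \<in> PiE N Si" using s t SP by auto
      ultimately have "s \<in> ?T" "t \<in> ?T" using s(2) t(2) by blast+
      then show ?thesis using sl tl by blast
    qed
    moreover have "?T \<subseteq> S" by auto
    ultimately show ?thesis unfolding subcomplete_sublattice_def by auto
  qed
  show ?thesis
    by (intro conjI ballI) (rule P1, assumption, rule P2, assumption+, rule P3, assumption)
qed

end
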